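(* Let $V$ be a finite set and let $X$ be a real vector indexed by all subsets of $V$. Then $X$ satisfies $$\sum_{T\subseteq R}(-1)^{|R\setminus T|}X(T\cup Z)\le\begin{cases}1&\text{if }|R|=1,\\0&\text{otherwise,}\end{cases}\qquad\text{for all nonempty }R\subseteq V\text{ and all }Z\subseteq V\text{ with }Z\cap R=\emptyset,$$ if and only if it satisfies $$\sum_{T\subseteq R}(-1)^{|T|}\big(X(R\setminus T)-|R\setminus T|\big)\le0\qquad\text{for all nonempty }R\subseteq V.$$ *)

theory Defs
  imports Complex_Main
begin

end

theory Submission
  imports Defs
begin

lemma split_pow:
  fixes F :: "'a set \<Rightarrow> real"
  assumes "finite R" "z \<notin> R"
  shows "(\<Sum>T\<in>Pow (insert z R). (-1) ^ card (insert z R - T) * F T)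
       = (\<Sum>T\<in>Pow R. (-1) ^ card (R - T) * F (insert z T))
         - (\<Sum>T\<in>Pow R. (-1) ^ card (R - T) * F T)"
proof -
  have fin: "finite (Pow R)" "finite (insert z ` Pow R)" using assms by auto
  have dis: "Pow R \<inter> insert z ` Pow R = {}" using assms by auto
  have inj: "inj_on (insert z) (Pow R)" using assms unfolding inj_on_def by (metis Diff_insert_absorb PowD subsetD)
  have "(\<Sum>T\<in>Pow (insert z R). (-1) ^ card (insert z R - T) * F T)
      = (\<Sum>T\<in>Pow R. (-1) ^ card (insert z R - T) * F T)
        + (\<Sum>T\<in>insert z ` Pow R. (-1) ^ card (insert z R - T) * F T)"
    unfolding Pow_insert by (rule sum.union_disjoint[OF fin dis])
  also have "(\<Sum>T\<in>Pow R. (-1) ^ card (insert z R - T) * F T)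
      = (\<Sum>T\<in>Pow R. - ((-1) ^ card (R - T) * F T))"
  proof (rule sum.cong)
    fix T assume "T \<in> Pow R"
    then have "insert z R - T = insert z (R - T)" "z \<notin> R - T" using assms by auto
    then have "card (insert z R - T) = Suc (card (R - T))" using assms by simp
    then show "(-1) ^ card (insert z R - T) * F T = - ((-1) ^ card (R - T) * F T)" by simp
  qed simp
  also have "(\<Sum>T\<in>insert z ` Pow R. (-1) ^ card (insert z R - T) * F T)
      = (\<Sum>T\<in>Pow R. (-1) ^ card (R - T) * F (insert z T))"
  proof -
    have "(\<Sum>T\<in>insert z ` Pow R. (-1) ^ card (insert z R - T) * F T)
        = (\<Sum>T\<in>Pow R. (-1) ^ card (insert z R - insert z T) * F (insert z T))"
      by (simp add: sum.reindex[OF inj])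
    also have "\<dots> = (\<Sum>T\<in>Pow R. (-1) ^ card (R - T) * F (insert z T))"
    proof (rule sum.cong)
      fix T assume "T \<in> Pow R"
      then have "insert z R - insert z T = R - T" using assms by auto
      then show "(-1) ^ card (insert z R - insert z T) * F (insert z T) = (-1) ^ card (R - T) * F (insert z T)" by simp
    qed simp
    finally show ?thesis .
  qed
  finally show ?thesis by (simp add: sum_negf)
qed

lemma h_lemma:
  assumes "finite R"
  shows "(\<Sum>T\<in>Pow R. (-1) ^ card (R - T) * (1::real)) = (if R = {} then 1 else 0)"
  using assms
proof (induction R rule: finite_induct)
  case empty then show ?case by simp
next
  case (insert z R)
  show ?case using split_pow[OF insert(1,2), of "\<lambda>_. 1"] by simp
qed

lemma g_lemma:
  assumes "finite R" "R \<noteq> {}"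
  shows "(\<Sum>T\<in>Pow R. (-1) ^ card (R - T) * real (card T)) = (if card R = 1 then 1 else 0)"
proof -
  obtain z where "z \<in> R" using assms by blast
  then obtain R' where R: "R = insert z R'" "z \<notin> R'" by (meson Set.set_insert)
  have fR': "finite R'" using assms R by simp
  have "(\<Sum>T\<in>Pow R. (-1) ^ card (R - T) * real (card T))
     = (\<Sum>T\<in>Pow R'. (-1) ^ card (R' - T) * real (card (insert z T)))
       - (\<Sum>T\<in>Pow R'. (-1) ^ card (R' - T) * real (card T))"
    unfolding R by (rule split_pow[OF fR' R(2)])
  also have "(\<Sum>T\<in>Pow R'. (-1) ^ card (R' - T) * real (card (insert z T)))
     = (\<Sum>T\<in>Pow R'. (-1) ^ card (R' - T) * real (card T) + (-1) ^ card (R' - T) * 1)"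
  proof (rule sum.cong)
    fix T assume "T \<in> Pow R'"
    then have "finite T" "z \<notin> T" using R fR' finite_subset by auto
    then have "card (insert z T) = Suc (card T)" by simp
    then show "(-1) ^ card (R' - T) * real (card (insert z T)) = (-1) ^ card (R' - T) * real (card T) + (-1) ^ card (R' - T) * 1"
      by (simp add: algebra_simps)
  qed simp
  finally have "(\<Sum>T\<in>Pow R. (-1) ^ card (R - T) * real (card T)) = (\<Sum>T\<in>Pow R'. (-1) ^ card (R' - T) * (1::real))"
    by (simp add: sum.distrib)
  also have "\<dots> = (if R' = {} then 1 else 0)" by (rule h_lemma[OF fR'])
  also have "\<dots> = (if card R = 1 then 1 else 0)" using R fR' by (simp add: card_0_eq)
  finally show ?thesis .
qed

lemma reindex_lemma:
  fixes X :: "'a set \<Rightarrow> real"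
  assumes "finite R"
  shows "(\<Sum>T\<in>Pow R. (-1) ^ card T * (X (R - T) - real (card (R - T))))
       = (\<Sum>T\<in>Pow R. (-1) ^ card (R - T) * X (T \<union> {})) - (\<Sum>T\<in>Pow R. (-1) ^ card (R - T) * real (card T))"
proof -
  have bij: "bij_betw (\<lambda>T. R - T) (Pow R) (Pow R)"
    by (rule bij_betw_byWitness[where f'="\<lambda>T. R - T"]) auto
  have "(\<Sum>T\<in>Pow R. (-1) ^ card T * (X (R - T) - real (card (R - T))))
      = (\<Sum>T\<in>Pow R. (-1) ^ card (R - (R - T)) * (X (R - T) - real (card (R - T))))"
    by (rule sum.cong) (auto simp: Diff_Diff_Int Int_absorb1)
  also have "\<dots> = (\<Sum>U\<in>Pow R. (-1) ^ card (R - U) * (X U - real (card U)))"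
    by (rule sum.reindex_bij_betw[OF bij, of "\<lambda>U. (-1) ^ card (R - U) * (X U - real (card U))"])
  finally show ?thesis by (simp add: right_diff_distrib sum_subtractf)
qed

lemma rec_lemma:
  fixes X :: "'a set \<Rightarrow> real"
  assumes "finite R" "z \<notin> R" "z \<notin> Z"
  shows "(\<Sum>T\<in>Pow R. (-1) ^ card (R - T) * X (T \<union> insert z Z))
       = (\<Sum>T\<in>Pow (insert z R). (-1) ^ card (insert z R - T) * X (T \<union> Z))
         + (\<Sum>T\<in>Pow R. (-1) ^ card (R - T) * X (T \<union> Z))"
  using split_pow[OF assms(1,2), of "\<lambda>T. X (T \<union> Z)"] by simp

theorem lemma6p1:
  fixes V :: "'a set" and X :: "'a set \<Rightarrow> real"
  assumes "finite V"
  shows "(\<forall>R Z. R \<subseteq> V \<and> R \<noteq> {} \<and> Z \<subseteq> V \<and> Z \<inter> R = {} \<longrightarrow>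
            (\<Sum>T\<in>Pow R. (-1) ^ card (R - T) * X (T \<union> Z))
              \<le> (if card R = 1 then 1 else 0))
       \<longleftrightarrow>
         (\<forall>R. R \<subseteq> V \<and> R \<noteq> {} \<longrightarrow>
            (\<Sum>T\<in>Pow R. (-1) ^ card T * (X (R - T) - real (card (R - T)))) \<le> 0)"
proof
  assume H: "\<forall>R Z. R \<subseteq> V \<and> R \<noteq> {} \<and> Z \<subseteq> V \<and> Z \<inter> R = {} \<longrightarrow>
            (\<Sum>T\<in>Pow R. (-1) ^ card (R - T) * X (T \<union> Z))
              \<le> (if card R = 1 then 1 else 0)"
  show "\<forall>R. R \<subseteq> V \<and> R \<noteq> {} \<longrightarrow>
            (\<Sum>T\<in>Pow R. (-1) ^ card T * (X (R - T) - real (card (R - T)))) \<le> 0"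
  proof (intro allI impI)
    fix R assume R: "R \<subseteq> V \<and> R \<noteq> {}"
    then have fR: "finite R" using assms finite_subset by blast
    have "(\<Sum>T\<in>Pow R. (-1) ^ card (R - T) * X (T \<union> {})) \<le> (if card R = 1 then 1 else 0)"
      using H R by blast
    moreover note reindex_lemma[OF fR, of X]
    moreover note g_lemma[OF fR conjunct2[OF R]]
    ultimately show "(\<Sum>T\<in>Pow R. (-1) ^ card T * (X (R - T) - real (card (R - T)))) \<le> 0"
      by linarith
  qed
next
  assume H: "\<forall>R. R \<subseteq> V \<and> R \<noteq> {} \<longrightarrow>
            (\<Sum>T\<in>Pow R. (-1) ^ card T * (X (R - T) - real (card (R - T)))) \<le> 0"
  have base: "(\<Sum>T\<in>Pow R. (-1) ^ card (R - T) * X (T \<union> {})) \<le> (if card R = 1 then 1 else 0)"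
    if R: "R \<subseteq> V" "R \<noteq> {}" for R
  proof -
    have fR: "finite R" using assms R finite_subset by blast
    have "(\<Sum>T\<in>Pow R. (-1) ^ card T * (X (R - T) - real (card (R - T)))) \<le> 0"
      using H R by blast
    moreover note reindex_lemma[OF fR, of X]
    moreover note g_lemma[OF fR R(2)]
    ultimately show ?thesis by linarith
  qed
  have main: "\<forall>R. R \<subseteq> V \<and> R \<noteq> {} \<and> Z \<inter> R = {} \<longrightarrow>
      (\<Sum>T\<in>Pow R. (-1) ^ card (R - T) * X (T \<union> Z)) \<le> (if card R = 1 then 1 else 0)"
    if fZ: "finite Z" and Z: "Z \<subseteq> V" for Z
    using fZ Z
  proof (induction Z rule: finite_induct)
    case empty then show ?case using base by blast
  next
    case (insert z Z)
    have ZV: "Z \<subseteq> V" and zV: "z \<in> V" using insert.prems by blast+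
    have IH: "\<forall>R. R \<subseteq> V \<and> R \<noteq> {} \<and> Z \<inter> R = {} \<longrightarrow>
      (\<Sum>T\<in>Pow R. (-1) ^ card (R - T) * X (T \<union> Z)) \<le> (if card R = 1 then 1 else 0)"
      using insert.IH[OF ZV] .
    show ?case
    proof (intro allI impI)
      fix R assume RR: "R \<subseteq> V \<and> R \<noteq> {} \<and> insert z Z \<inter> R = {}"
      have RV: "R \<subseteq> V" and Rne: "R \<noteq> {}" using RR by blast+
      have ZR: "Z \<inter> R = {}" and zR: "z \<notin> R" using RR by blast+
      have fR: "finite R" using assms RV finite_subset by blast
      have c: "card (insert z R) = Suc (card R)" using fR zR by simp
      have "card R \<noteq> 0" using fR Rne by simp
      then have c1: "card (insert z R) \<noteq> 1" using c by simp
      have "insert z R \<subseteq> V \<and> insert z R \<noteq> {} \<and> Z \<inter> insert z R = {}"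
        using RV zV ZR insert.hyps(2) by blast
      then have A0: "(\<Sum>T\<in>Pow (insert z R). (-1) ^ card (insert z R - T) * X (T \<union> Z)) \<le> (if card (insert z R) = 1 then 1 else 0)"
        using IH by blast
      have A: "(\<Sum>T\<in>Pow (insert z R). (-1) ^ card (insert z R - T) * X (T \<union> Z)) \<le> 0"
        using A0 c1 by simp
      have B: "(\<Sum>T\<in>Pow R. (-1) ^ card (R - T) * X (T \<union> Z)) \<le> (if card R = 1 then 1 else 0)"
        using IH RV Rne ZR by blast
      show "(\<Sum>T\<in>Pow R. (-1) ^ card (R - T) * X (T \<union> insert z Z)) \<le> (if card R = 1 then 1 else 0)"
        unfolding rec_lemma[OF fR zR insert.hyps(2)] using A B by linarith
    qed
  qed
  show "\<forall>R Z. R \<subseteq> V \<and> R \<noteq> {} \<and> Z \<subseteq> V \<and> Z \<inter> R = {} \<longrightarrow>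
            (\<Sum>T\<in>Pow R. (-1) ^ card (R - T) * X (T \<union> Z))
              \<le> (if card R = 1 then 1 else 0)"
    using main assms finite_subset by blast
qed

end
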